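(* Assume $I_1\in L^1(\mu_V)$ and that $I_1,I_2$ are locally bounded. Suppose there exist positive functions $\phi\in\hat{\mathscr C}_{j,V}$ and $h\in C^\infty(\mathbb R^d)$ and constants $b,r>0$ such that for all $x\in\mathbb R^d$, $$\hat L_{j,V}\phi(x)\le -h(x)+b\mathbf 1_{B(0,r)}(x).$$ Then for every $f\in C_c^\infty(\mathbb R^d)$, $$\int f^2h\phi^{-1}\,d\mu_V\le\hat D_{j,V}(f,f)+b\int_{B(0,r)}f^2\phi^{-1}\,d\mu_V.$$ If moreover $\phi\ge c$ for some constant $c>0$, the same inequality holds for every $f\in C_b^\infty(\mathbb R^d)$.
   Context: Let $d\ge1$; $V$ locally bounded measurable with $\int e^{-V}<\infty$, $\mu_V(dx)=e^{-V(x)}dx/\int e^{-V}$. $j\ge0$ is measurable and symmetric on $\{(x,y):x\ne y\}$. $I_1(x):=\int(1\wedge|x-y|^2)j(x,y)\mu_V(dy)$, $I_2(x):=\int_{\{|z|\le1\}}|z|\,|j(x,x+z)e^{-V(x+z)}-j(x,x-z)e^{-V(x-z)}|dz$. Truncated form: $\hat D_{j,V}(f,g):=\frac12\iint_{\{|x-y|>1\}}(f(x)-f(y))(g(x)-g(y))j(x,y)\mu_V(dy)\mu_V(dx)$. Truncated operator: $\hat L_{j,V}f(x):=\int_{\{|x-y|>1\}}(f(y)-f(x))j(x,y)\mu_V(dy)$. $\hat{\mathscr C}_{j,V}$ is the set of $\phi\in C^\infty(\mathbb R^d)$ such that $x\mapsto\int_{\{|x-y|>1\}}|\phi(y)|j(x,y)\mu_V(dy)$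 is locally bounded. $B(0,r)$ is the open ball of radius $r$ centered at $0$. *)

theory Defs
  imports "HOL-Analysis.Analysis"
begin

text \<open>C-infinity functions R^d -> R: differentiable everywhere, and all partial
  derivatives (along the standard basis) are again C-infinity (greatest fixed point).\<close>
coinductive smooth_fun :: "('a::euclidean_space \<Rightarrow> real) \<Rightarrow> bool" where
  "(\<forall>x. f differentiable (at x)) \<Longrightarrow>
   (\<forall>i\<in>Basis. smooth_fun (\<lambda>x. frechet_derivative f (at x) i)) \<Longrightarrow> smooth_fun f"

coinductive smooth_bdd_fun :: "('a::euclidean_space \<Rightarrow> real) \<Rightarrow> bool" where
  "bounded (range f) \<Longrightarrow> (\<forall>x. f differentiable (at x)) \<Longrightarrow>
   (\<forall>i\<in>Basis. smooth_bdd_fun (\<lambda>x. frechet_derivative f (at x) i)) \<Longrightarrow> smooth_bdd_fun f"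

definition Cc_inf :: "('a::euclidean_space \<Rightarrow> real) \<Rightarrow> bool" where
  "Cc_inf f \<longleftrightarrow> smooth_fun f \<and> compact (closure {x. f x \<noteq> 0})"

definition Cb_inf :: "('a::euclidean_space \<Rightarrow> real) \<Rightarrow> bool" where
  "Cb_inf f \<longleftrightarrow> smooth_bdd_fun f"

definition loc_bdd :: "('a::euclidean_space \<Rightarrow> real) \<Rightarrow> bool" where
  "loc_bdd g \<longleftrightarrow> (\<forall>K. compact K \<longrightarrow> bounded (g ` K))"

definition loc_bdd_ennreal :: "('a::euclidean_space \<Rightarrow> ennreal) \<Rightarrow> bool" where
  "loc_bdd_ennreal g \<longleftrightarrow> (\<forall>K. compact K \<longrightarrow> (\<exists>C::real. \<forall>x\<in>K. g x \<le> ennreal C))"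

definition muV :: "('a::euclidean_space \<Rightarrow> real) \<Rightarrow> 'a measure" where
  "muV V = density lborel (\<lambda>x. ennreal (exp (- V x) / (\<integral>y. exp (- V y) \<partial>lborel)))"

definition I1 :: "('a::euclidean_space \<Rightarrow> 'a \<Rightarrow> real) \<Rightarrow> ('a \<Rightarrow> real) \<Rightarrow> 'a \<Rightarrow> ennreal" where
  "I1 j V x = (\<integral>\<^sup>+ y. ennreal (min 1 ((norm (x - y))\<^sup>2) * j x y) \<partial>muV V)"

definition I2 :: "('a::euclidean_space \<Rightarrow> 'a \<Rightarrow> real) \<Rightarrow> ('a \<Rightarrow> real) \<Rightarrow> 'a \<Rightarrow> ennreal" where
  "I2 j V x = (\<integral>\<^sup>+ z. indicator (cball 0 1) z *
      ennreal (norm z * \<bar>j x (x + z) * exp (- V (x + z)) - j x (x - z) * exp (- V (x - z))\<bar>) \<partial>lborel)"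

definition hatD :: "('a::euclidean_space \<Rightarrow> 'a \<Rightarrow> real) \<Rightarrow> ('a \<Rightarrow> real) \<Rightarrow> ('a \<Rightarrow> real) \<Rightarrow> ('a \<Rightarrow> real) \<Rightarrow> real" where
  "hatD j V f g = 1/2 * (\<integral>p. (case p of (x, y) \<Rightarrow>
      indicator {q. norm (fst q - snd q) > 1} (x, y) * ((f x - f y) * (g x - g y) * j x y))
      \<partial>(muV V \<Otimes>\<^sub>M muV V))"

definition hatL :: "('a::euclidean_space \<Rightarrow> 'a \<Rightarrow> real) \<Rightarrow> ('a \<Rightarrow> real) \<Rightarrow> ('a \<Rightarrow> real) \<Rightarrow> 'a \<Rightarrow> real" where
  "hatL j V f x = (\<integral>y. indicator {y. norm (x - y) > 1} y * ((f y - f x) * j x y) \<partial>muV V)"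

definition hatC :: "('a::euclidean_space \<Rightarrow> 'a \<Rightarrow> real) \<Rightarrow> ('a \<Rightarrow> real) \<Rightarrow> ('a \<Rightarrow> real) \<Rightarrow> bool" where
  "hatC j V \<phi> \<longleftrightarrow> smooth_fun \<phi> \<and>
     loc_bdd_ennreal (\<lambda>x. \<integral>\<^sup>+ y. indicator {y. norm (x - y) > 1} y * ennreal (\<bar>\<phi> y\<bar> * j x y) \<partial>muV V)"

end

theory Submission
  imports Defs
begin

lemma sets_muV[measurable_cong]: "sets (muV V) = sets borel"
  by (simp add: muV_def)
lemma space_muV[simp]: "space (muV V) = UNIV"
  by (simp add: muV_def)
lemma sets_muV2: "sets (muV V \<Otimes>\<^sub>M muV V) = sets (borel :: ('a::euclidean_space \<times> 'a) measure)"
  by (metis sets_pair_measure_cong sets_muV borel_prod)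

lemma finite_muV:
  assumes V_int: "integrable lborel (\<lambda>x. exp (- V x))"
  shows "finite_measure (muV (V::'a::euclidean_space \<Rightarrow> real))"
proof -
  define Z where "Z = (\<integral>y. exp (- V y) \<partial>lborel)"
  have Z0: "Z \<ge> 0" unfolding Z_def by (rule integral_nonneg_AE) auto
  have Vm: "(\<lambda>x. exp (- V x)) \<in> borel_measurable lborel" using V_int by auto
  have fin: "(\<integral>\<^sup>+x. ennreal (exp (- V x)) \<partial>lborel) < \<infinity>"
    using V_int unfolding integrable_iff_bounded by simp
  have "emeasure (muV V) UNIV = (\<integral>\<^sup>+x. ennreal (exp (- V x) / Z) \<partial>lborel)"
    unfolding muV_def Z_def[symmetric]
    by (subst emeasure_density) (use Vm in auto)
  also have "\<dots> = (\<integral>\<^sup>+x. ennreal (exp (- V x)) * ennreal (1/Z) \<partial>lborel)"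
    by (intro nn_integral_cong) (use Z0 in \<open>simp add: ennreal_mult[symmetric] divide_inverse\<close>)
  also have "\<dots> = (\<integral>\<^sup>+x. ennreal (exp (- V x)) \<partial>lborel) * ennreal (1/Z)"
    by (rule nn_integral_multc) (use Vm in auto)
  also have "\<dots> < \<infinity>" using fin by (simp add: ennreal_mult_less_top)
  finally show ?thesis
    by (intro finite_measureI) (simp add: less_top)
qed

lemma smooth_meas: "smooth_fun f \<Longrightarrow> f \<in> borel_measurable borel"
  by (erule smooth_fun.cases)
     (simp add: borel_measurable_continuous_onI differentiable_imp_continuous_on differentiable_on_def differentiable_at_withinI)

lemma smooth_cont: "smooth_fun f \<Longrightarrow> continuous_on UNIV f"
  by (erule smooth_fun.cases)
     (simp add: differentiable_imp_continuous_on differentiable_on_def differentiable_at_withinI)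

lemma smooth_bdd_cont: "smooth_bdd_fun f \<Longrightarrow> continuous_on UNIV f \<and> bounded (range f)"
  by (erule smooth_bdd_fun.cases)
     (simp add: differentiable_imp_continuous_on differentiable_on_def differentiable_at_withinI)

lemma iter_add:
  assumes "sigma_finite_measure M"
    and m1: "case_prod g1 \<in> borel_measurable (M \<Otimes>\<^sub>M M)"
    and m2: "case_prod g2 \<in> borel_measurable (M \<Otimes>\<^sub>M M)"
  shows "(\<integral>\<^sup>+x. \<integral>\<^sup>+y. g1 x y + g2 x y \<partial>M \<partial>M) = (\<integral>\<^sup>+x. \<integral>\<^sup>+y. g1 x y \<partial>M \<partial>M) + (\<integral>\<^sup>+x. \<integral>\<^sup>+y. g2 x y \<partial>M \<partial>M)"
proof -
  interpret sigma_finite_measure M by fact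
  have s1: "(\<lambda>y. g1 x y) \<in> borel_measurable M" if "x \<in> space M" for x
    using measurable_compose_Pair1[OF that m1] by simp
  have s2: "(\<lambda>y. g2 x y) \<in> borel_measurable M" if "x \<in> space M" for x
    using measurable_compose_Pair1[OF that m2] by simp
  have "(\<integral>\<^sup>+x. \<integral>\<^sup>+y. g1 x y + g2 x y \<partial>M \<partial>M) = (\<integral>\<^sup>+x. (\<integral>\<^sup>+y. g1 x y \<partial>M) + (\<integral>\<^sup>+y. g2 x y \<partial>M) \<partial>M)"
    by (intro nn_integral_cong nn_integral_add s1 s2)
  also have "\<dots> = (\<integral>\<^sup>+x. \<integral>\<^sup>+y. g1 x y \<partial>M \<partial>M) + (\<integral>\<^sup>+x. \<integral>\<^sup>+y. g2 x y \<partial>M \<partial>M)"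
    by (intro nn_integral_add borel_measurable_nn_integral m1 m2)
  finally show ?thesis .
qed
lemma le_ennreal_fin: "a \<le> ennreal C \<Longrightarrow> a < (\<infinity>::ennreal)"
  by (metis ennreal_less_top infinity_ennreal_def le_less_trans)


lemma core:
  fixes V :: "'a::euclidean_space \<Rightarrow> real"
    and j :: "'a \<Rightarrow> 'a \<Rightarrow> real"
    and \<phi> h f :: "'a \<Rightarrow> real"
    and b r :: real
  assumes V_int: "integrable lborel (\<lambda>x. exp (- V x))"
    and j_meas: "(\<lambda>p. j (fst p) (snd p)) \<in> borel_measurable borel"
    and j_nonneg: "\<And>x y. x \<noteq> y \<Longrightarrow> j x y \<ge> 0"
    and j_sym: "\<And>x y. x \<noteq> y \<Longrightarrow> j x y = j y x"
    and I1_lb: "loc_bdd_ennreal (I1 j V)"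
    and phi_pos: "\<And>x. \<phi> x > 0"
    and phi_C: "hatC j V \<phi>"
    and h_smooth: "smooth_fun h"
    and h_pos: "\<And>x. h x > 0"
    and b_pos: "b > 0"
    and Lyap: "\<And>x. hatL j V \<phi> x \<le> - h x + b * indicator (ball 0 r) x"
    and f_meas: "f \<in> borel_measurable borel"
    and fI1: "(\<integral>\<^sup>+ x. ennreal ((f x)\<^sup>2) * I1 j V x \<partial>muV V) < \<infinity>"
    and fB: "(\<integral>\<^sup>+ x. indicator (ball 0 r) x * ennreal ((f x)\<^sup>2 / \<phi> x) \<partial>muV V) < \<infinity>"
  shows "(\<integral>\<^sup>+ x. ennreal ((f x)\<^sup>2 * h x / \<phi> x) \<partial>muV V)
              \<le> ennreal (hatD j V f f)
                 + ennreal b * (\<integral>\<^sup>+ x. indicator (ball 0 r) x * ennreal ((f x)\<^sup>2 / \<phi> x) \<partial>muV V)"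
proof -
  define M where "M = muV V"
  interpret fm: finite_measure M unfolding M_def by (rule finite_muV[OF V_int])
  interpret ps: pair_sigma_finite M M
    by (simp add: pair_sigma_finite_def fm.sigma_finite_measure_axioms)
  have jm[measurable]: "(\<lambda>p. j (fst p) (snd p)) \<in> borel_measurable (M \<Otimes>\<^sub>M M)"
    unfolding M_def by (subst measurable_cong_sets[OF sets_muV2 refl]) (rule j_meas)
  have sM[measurable_cong]: "sets M = sets borel" unfolding M_def by (rule sets_muV)
  have spM[simp]: "space M = UNIV" unfolding M_def by simp
  have phis: "smooth_fun \<phi>" using phi_C unfolding hatC_def by simp
  have phim[measurable]: "\<phi> \<in> borel_measurable M"
    by (subst measurable_cong_sets[OF sM refl]) (rule smooth_meas[OF phis])
  have hm[measurable]: "h \<in> borel_measurable M"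
    by (subst measurable_cong_sets[OF sM refl]) (rule smooth_meas[OF h_smooth])
  have fm[measurable]: "f \<in> borel_measurable M"
    by (subst measurable_cong_sets[OF sM refl]) (rule f_meas)
  define A where "A x y = (if norm (x - y) > 1 then j x y else 0)" for x y
  have A_nn: "A x y \<ge> 0" for x y
    unfolding A_def using j_nonneg[of x y] by (cases "x = y") auto
  have PA_nn: "\<phi> y * A x y \<ge> 0" for x y
    using A_nn[of x y] phi_pos[of y] by simp
  have A_sym: "A x y = A y x" for x y
    unfolding A_def using j_sym[of x y] by (auto simp: norm_minus_commute)
  have Am[measurable]: "(\<lambda>p. A (fst p) (snd p)) \<in> borel_measurable (M \<Otimes>\<^sub>M M)"
    unfolding A_def by measurable
  have Asec[measurable]: "(\<lambda>y. A x y) \<in> borel_measurable M" for x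
    using measurable_compose_Pair1[OF _ Am, of x] by simp

  have JI: "(\<integral>\<^sup>+y. ennreal (A x y) \<partial>M) \<le> I1 j V x" for x
    unfolding I1_def M_def
  proof (intro nn_integral_mono ennreal_leI)
    fix y
    show "A x y \<le> min 1 ((norm (x - y))\<^sup>2) * j x y"
    proof (cases "norm (x - y) > 1")
      case True
      then have "(norm (x - y))\<^sup>2 > 1" using one_less_power[of "norm (x - y)" 2] by simp
      then show ?thesis using True by (simp add: A_def)
    next
      case False
      then have "x \<noteq> y \<Longrightarrow> j x y \<ge> 0" using j_nonneg by auto
      then show ?thesis using False by (cases "x = y") (auto simp: A_def)
    qed
  qed
  have perx: "ennreal ((f x)\<^sup>2 * h x / \<phi> x) + (\<integral>\<^sup>+y. ennreal ((f x)\<^sup>2 * \<phi> y / \<phi> x * A x y) \<partial>M)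
     \<le> (\<integral>\<^sup>+y. ennreal ((f x)\<^sup>2 * A x y) \<partial>M) + ennreal b * (indicator (ball 0 r) x * ennreal ((f x)\<^sup>2 / \<phi> x))" for x
  proof -
    obtain C1 where C1: "\<forall>z\<in>{x}. I1 j V z \<le> ennreal C1"
      using I1_lb unfolding loc_bdd_ennreal_def by (meson compact_sing)
    have Jfin: "(\<integral>\<^sup>+y. ennreal (A x y) \<partial>M) < \<infinity>"
    proof -
      have "I1 j V x \<le> ennreal C1" using C1 by simp
      then have "(\<integral>\<^sup>+y. ennreal (A x y) \<partial>M) \<le> ennreal C1" using JI by (rule order.trans[rotated])
      then show ?thesis by (rule le_ennreal_fin)
    qed
    obtain C2 where C2: "\<forall>z\<in>{x}. (\<integral>\<^sup>+ y. indicator {y. norm (z - y) > 1} y * ennreal (\<bar>\<phi> y\<bar> * j z y) \<partial>muV V) \<le> ennreal C2"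
      using phi_C unfolding hatC_def loc_bdd_ennreal_def by (meson compact_sing)
    have "(\<integral>\<^sup>+y. ennreal (\<phi> y * A x y) \<partial>M) = (\<integral>\<^sup>+ y. indicator {y. norm (x - y) > 1} y * ennreal (\<bar>\<phi> y\<bar> * j x y) \<partial>muV V)"
      unfolding M_def
      by (intro nn_integral_cong) (auto simp: A_def indicator_def abs_of_pos[OF phi_pos])
    note that_eq = this
    have Pfin: "(\<integral>\<^sup>+y. ennreal (\<phi> y * A x y) \<partial>M) < \<infinity>"
    proof -
      have "(\<integral>\<^sup>+ y. indicator {y. norm (x - y) > 1} y * ennreal (\<bar>\<phi> y\<bar> * j x y) \<partial>muV V) \<le> ennreal C2" using C2 by simp
      then show ?thesis using that_eq by (metis le_ennreal_fin)
    qed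
    have iA: "integrable M (\<lambda>y. A x y)"
      by (rule integrableI_nonneg) (use Jfin A_nn in auto)
    have iPA: "integrable M (\<lambda>y. \<phi> y * A x y)"
      by (rule integrableI_nonneg) (use Pfin PA_nn in auto)
    have "hatL j V \<phi> x = (\<integral>y. \<phi> y * A x y - \<phi> x * A x y \<partial>M)"
      unfolding hatL_def M_def
      by (intro Bochner_Integration.integral_cong) (auto simp: A_def indicator_def algebra_simps)
    also have "\<dots> = (\<integral>y. \<phi> y * A x y \<partial>M) - \<phi> x * (\<integral>y. A x y \<partial>M)"
      using iA iPA by simp
    finally have hL: "hatL j V \<phi> x = (\<integral>y. \<phi> y * A x y \<partial>M) - \<phi> x * (\<integral>y. A x y \<partial>M)" .
    have eJ: "(\<integral>\<^sup>+y. ennreal (A x y) \<partial>M) = ennreal (\<integral>y. A x y \<partial>M)"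
      by (rule nn_integral_eq_integral[OF iA]) (use A_nn in auto)
    have ePA: "(\<integral>\<^sup>+y. ennreal (\<phi> y * A x y) \<partial>M) = ennreal (\<integral>y. \<phi> y * A x y \<partial>M)"
      by (rule nn_integral_eq_integral[OF iPA]) (use PA_nn in auto)
    define IJ where "IJ = (\<integral>y. A x y \<partial>M)"
    define IP where "IP = (\<integral>y. \<phi> y * A x y \<partial>M)"
    have IJ0: "IJ \<ge> 0" unfolding IJ_def using A_nn by (simp add: integral_nonneg_AE)
    have IP0: "IP \<ge> 0" unfolding IP_def using PA_nn
      by (intro integral_nonneg_AE) auto
    define c where "c = (f x)\<^sup>2 / \<phi> x"
    have c0: "c \<ge> 0" unfolding c_def using phi_pos[of x] by simp
    have real_ineq: "h x + IP \<le> \<phi> x * IJ + b * indicator (ball 0 r) x"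
      using Lyap[of x] hL unfolding IJ_def IP_def by linarith
    have real2: "c * h x + c * IP \<le> (f x)\<^sup>2 * IJ + b * indicator (ball 0 r) x * c"
    proof -
      have "c * (h x + IP) \<le> c * (\<phi> x * IJ + b * indicator (ball 0 r) x)"
        by (rule mult_left_mono[OF real_ineq c0])
      moreover have "c * \<phi> x = (f x)\<^sup>2" unfolding c_def using phi_pos[of x] by simp
      ultimately show ?thesis by (simp add: algebra_simps)
    qed
    have L1: "(\<integral>\<^sup>+y. ennreal ((f x)\<^sup>2 * \<phi> y / \<phi> x * A x y) \<partial>M) = ennreal c * ennreal IP"
    proof -
      have "(\<integral>\<^sup>+y. ennreal ((f x)\<^sup>2 * \<phi> y / \<phi> x * A x y) \<partial>M) = (\<integral>\<^sup>+y. ennreal c * ennreal (\<phi> y * A x y) \<partial>M)"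
        by (intro nn_integral_cong)
           (use c0 A_nn phi_pos in \<open>auto simp: c_def ennreal_mult[symmetric] less_imp_le\<close>)
      also have "\<dots> = ennreal c * (\<integral>\<^sup>+y. ennreal (\<phi> y * A x y) \<partial>M)"
        by (rule nn_integral_cmult) measurable
      finally show ?thesis using ePA unfolding IP_def by simp
    qed
    have R1: "(\<integral>\<^sup>+y. ennreal ((f x)\<^sup>2 * A x y) \<partial>M) = ennreal ((f x)\<^sup>2) * ennreal IJ"
    proof -
      have "(\<integral>\<^sup>+y. ennreal ((f x)\<^sup>2 * A x y) \<partial>M) = (\<integral>\<^sup>+y. ennreal ((f x)\<^sup>2) * ennreal (A x y) \<partial>M)"
        by (intro nn_integral_cong) (use A_nn in \<open>auto simp: ennreal_mult[symmetric]\<close>)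
      also have "\<dots> = ennreal ((f x)\<^sup>2) * (\<integral>\<^sup>+y. ennreal (A x y) \<partial>M)"
        by (rule nn_integral_cmult) measurable
      finally show ?thesis using eJ unfolding IJ_def by simp
    qed
    have hx0: "c * h x \<ge> 0" using c0 h_pos[of x] by simp
    have "ennreal ((f x)\<^sup>2 * h x / \<phi> x) + (\<integral>\<^sup>+y. ennreal ((f x)\<^sup>2 * \<phi> y / \<phi> x * A x y) \<partial>M)
        = ennreal (c * h x + c * IP)"
    proof -
      have e1: "ennreal c * ennreal IP = ennreal (c * IP)" using c0 IP0 by (simp add: ennreal_mult)
      have e2: "ennreal ((f x)\<^sup>2 * h x / \<phi> x) = ennreal (c * h x)" by (simp add: c_def)
      have "c * IP \<ge> 0" using c0 IP0 by simp
      then show ?thesis unfolding L1 e1 e2 using hx0 by (simp add: ennreal_plus)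
    qed
    also have "\<dots> \<le> ennreal ((f x)\<^sup>2 * IJ + b * indicator (ball 0 r) x * c)"
      by (rule ennreal_leI[OF real2])
    also have "\<dots> = (\<integral>\<^sup>+y. ennreal ((f x)\<^sup>2 * A x y) \<partial>M) + ennreal b * (indicator (ball 0 r) x * ennreal ((f x)\<^sup>2 / \<phi> x))"
    proof -
      have q1: "b * (f x)\<^sup>2 / \<phi> x \<ge> 0" using b_pos phi_pos[of x] by simp
      have q2: "(f x)\<^sup>2 * IJ \<ge> 0" using IJ0 by simp
      have e3: "ennreal b * (indicator (ball 0 r) x * ennreal ((f x)\<^sup>2 / \<phi> x)) = ennreal (b * indicator (ball 0 r) x * c)"
        using c0 b_pos by (cases "x \<in> ball 0 r") (simp_all add: c_def ennreal_mult[symmetric])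
      have e4: "ennreal ((f x)\<^sup>2) * ennreal IJ = ennreal ((f x)\<^sup>2 * IJ)" using IJ0 by (simp add: ennreal_mult)
      have q3: "b * indicator (ball 0 r) x * c \<ge> 0" using c0 b_pos by (simp add: indicator_def)
      show ?thesis unfolding R1 e3 e4 by (rule ennreal_plus[OF q2 q3])
    qed
    finally show ?thesis .
  qed

  define H where "H = (\<integral>\<^sup>+ x. ennreal ((f x)\<^sup>2 * h x / \<phi> x) \<partial>M)"
  define Bint where "Bint = (\<integral>\<^sup>+ x. indicator (ball 0 r) x * ennreal ((f x)\<^sup>2 / \<phi> x) \<partial>M)"
  define P where "P = (\<integral>\<^sup>+x. \<integral>\<^sup>+y. ennreal ((f x)\<^sup>2 * A x y) \<partial>M \<partial>M)"
  define Q where "Q = (\<integral>\<^sup>+x. \<integral>\<^sup>+y. ennreal ((f y)\<^sup>2 * A x y) \<partial>M \<partial>M)"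
  define N where "N = (\<integral>\<^sup>+x. \<integral>\<^sup>+y. ennreal ((f x)\<^sup>2 * \<phi> y / \<phi> x * A x y) \<partial>M \<partial>M)"
  define N2 where "N2 = (\<integral>\<^sup>+x. \<integral>\<^sup>+y. ennreal ((f y)\<^sup>2 * \<phi> x / \<phi> y * A x y) \<partial>M \<partial>M)"
  define D2 where "D2 = (\<integral>\<^sup>+x. \<integral>\<^sup>+y. ennreal ((f x - f y)\<^sup>2 * A x y) \<partial>M \<partial>M)"
  have mP[measurable]: "(\<lambda>(x, y). ennreal ((f x)\<^sup>2 * A x y)) \<in> borel_measurable (M \<Otimes>\<^sub>M M)"
    using Am by measurable
  have mQ[measurable]: "(\<lambda>(x, y). ennreal ((f y)\<^sup>2 * A x y)) \<in> borel_measurable (M \<Otimes>\<^sub>M M)"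
    using Am by measurable
  have mN[measurable]: "(\<lambda>(x, y). ennreal ((f x)\<^sup>2 * \<phi> y / \<phi> x * A x y)) \<in> borel_measurable (M \<Otimes>\<^sub>M M)"
    using Am by measurable
  have mN2[measurable]: "(\<lambda>(x, y). ennreal ((f y)\<^sup>2 * \<phi> x / \<phi> y * A x y)) \<in> borel_measurable (M \<Otimes>\<^sub>M M)"
    using Am by measurable
  have mD[measurable]: "(\<lambda>(x, y). ennreal ((f x - f y)\<^sup>2 * A x y)) \<in> borel_measurable (M \<Otimes>\<^sub>M M)"
    using Am by measurable
  have ballM[measurable]: "ball 0 r \<in> sets M" by (simp add: sM)
  have mH: "(\<lambda>x. ennreal ((f x)\<^sup>2 * h x / \<phi> x)) \<in> borel_measurable M" by measurable
  have mB: "(\<lambda>x. ennreal b * (indicator (ball 0 r) x * ennreal ((f x)\<^sup>2 / \<phi> x))) \<in> borel_measurable M" by measurable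
  have S4: "H + N \<le> P + ennreal b * Bint"
  proof -
    have "H + N = (\<integral>\<^sup>+x. ennreal ((f x)\<^sup>2 * h x / \<phi> x) + (\<integral>\<^sup>+y. ennreal ((f x)\<^sup>2 * \<phi> y / \<phi> x * A x y) \<partial>M) \<partial>M)"
      unfolding H_def N_def
      by (rule nn_integral_add[symmetric]) (fact mH, rule fm.borel_measurable_nn_integral[OF mN])
    also have "\<dots> \<le> (\<integral>\<^sup>+x. (\<integral>\<^sup>+y. ennreal ((f x)\<^sup>2 * A x y) \<partial>M) + ennreal b * (indicator (ball 0 r) x * ennreal ((f x)\<^sup>2 / \<phi> x)) \<partial>M)"
      by (intro nn_integral_mono perx)
    also have "\<dots> = P + (\<integral>\<^sup>+x. ennreal b * (indicator (ball 0 r) x * ennreal ((f x)\<^sup>2 / \<phi> x)) \<partial>M)"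
      unfolding P_def
      by (rule nn_integral_add) (rule fm.borel_measurable_nn_integral[OF mP], fact mB)
    also have "(\<integral>\<^sup>+x. ennreal b * (indicator (ball 0 r) x * ennreal ((f x)\<^sup>2 / \<phi> x)) \<partial>M) = ennreal b * Bint"
      unfolding Bint_def by (rule nn_integral_cmult) (use mB in measurable)
    finally show ?thesis .
  qed
  have QP: "Q = P"
  proof -
    have "Q = (\<integral>\<^sup>+y. \<integral>\<^sup>+x. ennreal ((f x)\<^sup>2 * A x y) \<partial>M \<partial>M)"
      unfolding Q_def by (intro nn_integral_cong) (subst A_sym, rule refl)
    also have "\<dots> = P" unfolding P_def
      by (rule ps.Fubini'[of "\<lambda>x y. ennreal ((f x)\<^sup>2 * A x y)"]) (rule mP)
    finally show ?thesis .
  qed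
  have NN: "N2 = N"
  proof -
    have "N2 = (\<integral>\<^sup>+y. \<integral>\<^sup>+x. ennreal ((f x)\<^sup>2 * \<phi> y / \<phi> x * A x y) \<partial>M \<partial>M)"
      unfolding N2_def by (intro nn_integral_cong) (subst A_sym, rule refl)
    also have "\<dots> = N" unfolding N_def
      by (rule ps.Fubini'[of "\<lambda>x y. ennreal ((f x)\<^sup>2 * \<phi> y / \<phi> x * A x y)"]) (rule mN)
    finally show ?thesis .
  qed
  have pw: "(f x)\<^sup>2 * A x y + (f y)\<^sup>2 * A x y \<le> (f x - f y)\<^sup>2 * A x y + ((f x)\<^sup>2 * \<phi> y / \<phi> x * A x y + (f y)\<^sup>2 * \<phi> x / \<phi> y * A x y)" for x y
  proof -
    have px: "\<phi> x > 0" and py: "\<phi> y > 0" using phi_pos by auto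
    have "(f x)\<^sup>2 * \<phi> y / \<phi> x + (f y)\<^sup>2 * \<phi> x / \<phi> y - 2 * f x * f y = (f x * \<phi> y - f y * \<phi> x)\<^sup>2 / (\<phi> x * \<phi> y)"
      using px py by (simp add: field_simps power2_eq_square)
    also have "\<dots> \<ge> 0" using px py by simp
    finally have k: "2 * f x * f y \<le> (f x)\<^sup>2 * \<phi> y / \<phi> x + (f y)\<^sup>2 * \<phi> x / \<phi> y" by simp
    have "((f x)\<^sup>2 + (f y)\<^sup>2) * A x y \<le> ((f x - f y)\<^sup>2 + ((f x)\<^sup>2 * \<phi> y / \<phi> x + (f y)\<^sup>2 * \<phi> x / \<phi> y)) * A x y"
      by (rule mult_right_mono[OF _ A_nn]) (use k in \<open>simp add: power2_eq_square algebra_simps\<close>)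
    then show ?thesis by (simp add: algebra_simps)
  qed
  have S5: "P + Q \<le> D2 + (N + N2)"
  proof -
    have "P + Q = (\<integral>\<^sup>+x. \<integral>\<^sup>+y. ennreal ((f x)\<^sup>2 * A x y) + ennreal ((f y)\<^sup>2 * A x y) \<partial>M \<partial>M)"
      unfolding P_def Q_def by (rule iter_add[symmetric]) (use fm.sigma_finite_measure_axioms mP mQ in auto)
    also have "\<dots> \<le> (\<integral>\<^sup>+x. \<integral>\<^sup>+y. ennreal ((f x - f y)\<^sup>2 * A x y) + (ennreal ((f x)\<^sup>2 * \<phi> y / \<phi> x * A x y) + ennreal ((f y)\<^sup>2 * \<phi> x / \<phi> y * A x y)) \<partial>M \<partial>M)"
    proof (intro nn_integral_mono)
      fix x y
      have a: "(f x)\<^sup>2 * A x y \<ge> 0" "(f y)\<^sup>2 * A x y \<ge> 0" "(f x - f y)\<^sup>2 * A x y \<ge> 0"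
        using A_nn by auto
      have b: "(f x)\<^sup>2 * \<phi> y / \<phi> x * A x y \<ge> 0" "(f y)\<^sup>2 * \<phi> x / \<phi> y * A x y \<ge> 0"
        using A_nn phi_pos[of x] phi_pos[of y] by auto
      show "ennreal ((f x)\<^sup>2 * A x y) + ennreal ((f y)\<^sup>2 * A x y) \<le> ennreal ((f x - f y)\<^sup>2 * A x y) + (ennreal ((f x)\<^sup>2 * \<phi> y / \<phi> x * A x y) + ennreal ((f y)\<^sup>2 * \<phi> x / \<phi> y * A x y))"
        using pw[of x y] a b by (simp add: ennreal_plus[symmetric] del: ennreal_plus)
    qed
    also have "\<dots> = D2 + (\<integral>\<^sup>+x. \<integral>\<^sup>+y. ennreal ((f x)\<^sup>2 * \<phi> y / \<phi> x * A x y) + ennreal ((f y)\<^sup>2 * \<phi> x / \<phi> y * A x y) \<partial>M \<partial>M)"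
      unfolding D2_def by (rule iter_add) (use fm.sigma_finite_measure_axioms mD mN mN2 in auto)
    also have "(\<integral>\<^sup>+x. \<integral>\<^sup>+y. ennreal ((f x)\<^sup>2 * \<phi> y / \<phi> x * A x y) + ennreal ((f y)\<^sup>2 * \<phi> x / \<phi> y * A x y) \<partial>M \<partial>M) = N + N2"
      unfolding N_def N2_def by (rule iter_add) (use fm.sigma_finite_measure_axioms mN mN2 in auto)
    finally show ?thesis .
  qed

  have Pfin: "P < \<infinity>"
  proof -
    have "P = (\<integral>\<^sup>+x. ennreal ((f x)\<^sup>2) * (\<integral>\<^sup>+y. ennreal (A x y) \<partial>M) \<partial>M)"
      unfolding P_def
    proof (intro nn_integral_cong)
      fix x
      have "(\<integral>\<^sup>+y. ennreal ((f x)\<^sup>2 * A x y) \<partial>M) = (\<integral>\<^sup>+y. ennreal ((f x)\<^sup>2) * ennreal (A x y) \<partial>M)"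
        by (intro nn_integral_cong) (use A_nn in \<open>auto simp: ennreal_mult[symmetric]\<close>)
      also have "\<dots> = ennreal ((f x)\<^sup>2) * (\<integral>\<^sup>+y. ennreal (A x y) \<partial>M)"
        by (rule nn_integral_cmult) measurable
      finally show "(\<integral>\<^sup>+y. ennreal ((f x)\<^sup>2 * A x y) \<partial>M) = ennreal ((f x)\<^sup>2) * (\<integral>\<^sup>+y. ennreal (A x y) \<partial>M)" .
    qed
    also have "\<dots> \<le> (\<integral>\<^sup>+x. ennreal ((f x)\<^sup>2) * I1 j V x \<partial>M)"
      by (intro nn_integral_mono mult_left_mono JI) auto
    also have "\<dots> < \<infinity>" using fI1 unfolding M_def .
    finally show ?thesis .
  qed
  have Bfin: "Bint < \<infinity>" using fB unfolding Bint_def M_def .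
  have HNfin: "H + N < \<infinity>"
  proof -
    have "P + ennreal b * Bint < \<infinity>" using Pfin Bfin
      by (simp add: ennreal_mult_less_top)
    then show ?thesis using S4 by (rule le_less_trans[rotated])
  qed
  have Nfin: "N < \<infinity>" and Hfin: "H < \<infinity>" using HNfin by auto
  have mPQ: "(\<lambda>(x, y). ennreal ((f x)\<^sup>2 * A x y) + ennreal ((f y)\<^sup>2 * A x y)) \<in> borel_measurable (M \<Otimes>\<^sub>M M)"
    using Am by measurable
  have D2fin: "D2 < \<infinity>"
  proof -
    have "D2 \<le> (\<integral>\<^sup>+x. \<integral>\<^sup>+y. (ennreal ((f x)\<^sup>2 * A x y) + ennreal ((f y)\<^sup>2 * A x y)) + (ennreal ((f x)\<^sup>2 * A x y) + ennreal ((f y)\<^sup>2 * A x y)) \<partial>M \<partial>M)"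
      unfolding D2_def
    proof (intro nn_integral_mono)
      fix x y
      have a: "(f x)\<^sup>2 * A x y \<ge> 0" "(f y)\<^sup>2 * A x y \<ge> 0" using A_nn by auto
      have "(f x - f y)\<^sup>2 \<le> 2 * (f x)\<^sup>2 + 2 * (f y)\<^sup>2"
        using zero_le_power2[of "f x + f y"] by (simp add: power2_eq_square algebra_simps)
      then have "(f x - f y)\<^sup>2 * A x y \<le> (2 * (f x)\<^sup>2 + 2 * (f y)\<^sup>2) * A x y"
        by (rule mult_right_mono[OF _ A_nn])
      then have "(f x - f y)\<^sup>2 * A x y \<le> ((f x)\<^sup>2 * A x y + (f y)\<^sup>2 * A x y) + ((f x)\<^sup>2 * A x y + (f y)\<^sup>2 * A x y)"
        by (simp add: algebra_simps)
      then show "ennreal ((f x - f y)\<^sup>2 * A x y) \<le> (ennreal ((f x)\<^sup>2 * A x y) + ennreal ((f y)\<^sup>2 * A x y)) + (ennreal ((f x)\<^sup>2 * A x y) + ennreal ((f y)\<^sup>2 * A x y))"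
      proof -
        have "ennreal ((f x - f y)\<^sup>2 * A x y) \<le> ennreal (((f x)\<^sup>2 * A x y + (f y)\<^sup>2 * A x y) + ((f x)\<^sup>2 * A x y + (f y)\<^sup>2 * A x y))"
          by (rule ennreal_leI) fact
        also have "\<dots> = (ennreal ((f x)\<^sup>2 * A x y) + ennreal ((f y)\<^sup>2 * A x y)) + (ennreal ((f x)\<^sup>2 * A x y) + ennreal ((f y)\<^sup>2 * A x y))"
          using a by (simp only: ennreal_plus add_nonneg_nonneg)
        finally show ?thesis .
      qed
    qed
    also have "\<dots> = (P + Q) + (P + Q)"
      by (subst iter_add[OF fm.sigma_finite_measure_axioms mPQ mPQ])
         (simp add: P_def Q_def iter_add[OF fm.sigma_finite_measure_axioms mP mQ])
    also have "\<dots> < \<infinity>" using Pfin QP by (simp add: ennreal_add_less_top less_top)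
    finally show ?thesis .
  qed
  define G where "G = (\<lambda>p::'a\<times>'a. (f (fst p) - f (snd p))\<^sup>2 * A (fst p) (snd p))"
  have mG: "G \<in> borel_measurable (M \<Otimes>\<^sub>M M)" unfolding G_def using Am by measurable
  have G_nn: "G p \<ge> 0" for p unfolding G_def using A_nn by simp
  have hD: "hatD j V f f = 1/2 * (\<integral>p. G p \<partial>(M \<Otimes>\<^sub>M M))"
  proof -
    have "(\<lambda>p. case p of (x, y) \<Rightarrow> indicator {q. norm (fst q - snd q) > 1} (x, y) * ((f x - f y) * (f x - f y) * j x y)) = G"
      by (rule ext) (auto simp: G_def A_def indicator_def power2_eq_square split: prod.split)
    then show ?thesis unfolding hatD_def M_def by simp
  qed
  have GD: "(\<integral>\<^sup>+p. ennreal (G p) \<partial>(M \<Otimes>\<^sub>M M)) = D2"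
    unfolding D2_def using fm.nn_integral_fst[of "\<lambda>p. ennreal (G p)" M] mG by (simp add: G_def)
  have iG: "integrable (M \<Otimes>\<^sub>M M) G"
    by (rule integrableI_nonneg) (use mG G_nn GD D2fin in auto)
  have eG: "ennreal (\<integral>p. G p \<partial>(M \<Otimes>\<^sub>M M)) = D2"
    using nn_integral_eq_integral[OF iG] G_nn GD by simp
  have G0: "(\<integral>p. G p \<partial>(M \<Otimes>\<^sub>M M)) \<ge> 0" using G_nn by (simp add: integral_nonneg_AE)
  have hDe: "ennreal (hatD j V f f) = ennreal (1/2) * D2"
    unfolding hD eG[symmetric] by (rule ennreal_mult) (use G0 in auto)
  obtain p where p: "p \<ge> 0" "P = ennreal p" using Pfin by (cases P rule: ennreal_cases) auto
  obtain n where n: "n \<ge> 0" "N = ennreal n" using Nfin by (cases N rule: ennreal_cases) auto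
  obtain d where d: "d \<ge> 0" "D2 = ennreal d" using D2fin by (cases D2 rule: ennreal_cases) auto
  obtain e where e: "e \<ge> 0" "H = ennreal e" using Hfin by (cases H rule: ennreal_cases) auto
  obtain be where be: "be \<ge> 0" "Bint = ennreal be" using Bfin by (cases Bint rule: ennreal_cases) auto
  have r1: "e + n \<le> p + b * be"
  proof -
    have "ennreal (e + n) \<le> ennreal (p + b * be)"
      using S4 p n e be b_pos by (simp add: ennreal_plus[symmetric] ennreal_mult[symmetric] del: ennreal_plus)
    moreover have nn: "0 \<le> p + b * be" using p be b_pos by simp
    ultimately show ?thesis using ennreal_le_iff[OF nn] by blast
  qed
  have r2: "p + p \<le> d + (n + n)"
  proof -
    have "ennreal (p + p) \<le> ennreal (d + (n + n))"
      using S5 QP NN p n d by (simp add: ennreal_plus[symmetric] del: ennreal_plus)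
    moreover have nn: "0 \<le> d + (n + n)" using n d by simp
    ultimately show ?thesis using ennreal_le_iff[OF nn] by blast
  qed
  have "H \<le> ennreal (1/2) * D2 + ennreal b * Bint"
  proof -
    have "e \<le> 1/2 * d + b * be" using r1 r2 by linarith
    then have "ennreal e \<le> ennreal (1/2 * d + b * be)" by (rule ennreal_leI)
    also have "\<dots> = ennreal (1/2) * ennreal d + ennreal b * ennreal be"
    proof -
      have q1: "ennreal (1/2 * d + b * be) = ennreal (1/2 * d) + ennreal (b * be)"
        by (rule ennreal_plus) (use d be b_pos in auto)
      have q2: "ennreal (1/2 * d) = ennreal (1/2) * ennreal d"
        by (rule ennreal_mult) (use d in auto)
      have q3: "ennreal (b * be) = ennreal b * ennreal be"
        by (rule ennreal_mult) (use be b_pos in auto)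
      show ?thesis unfolding q1 q2 q3 ..
    qed
    finally show ?thesis using e d be by simp
  qed
  then show ?thesis unfolding hDe[symmetric] H_def Bint_def M_def .
qed


lemma const_bound_fin:
  assumes "finite_measure M" and "\<And>x. g x \<le> ennreal c"
  shows "(\<integral>\<^sup>+x. g x \<partial>M) < \<infinity>"
proof -
  interpret finite_measure M by fact
  have "(\<integral>\<^sup>+x. g x \<partial>M) \<le> (\<integral>\<^sup>+x. ennreal c \<partial>M)" by (intro nn_integral_mono assms(2))
  also have "\<dots> = ennreal c * emeasure M (space M)" by simp
  also have "\<dots> < \<infinity>"
  proof -
    have "emeasure M (space M) < top" using emeasure_finite[of "space M"] by (simp add: less_top[symmetric])
    then show ?thesis by (simp add: ennreal_mult_less_top)
  qed
  finally show ?thesis .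
qed

theorem proposition3p2:
  fixes V :: "'a::euclidean_space \<Rightarrow> real"
    and j :: "'a \<Rightarrow> 'a \<Rightarrow> real"
    and \<phi> h :: "'a \<Rightarrow> real"
    and b r :: real
  assumes V_meas: "V \<in> borel_measurable borel"
    and V_lb: "loc_bdd V"
    and V_int: "integrable lborel (\<lambda>x. exp (- V x))"
    and j_meas: "(\<lambda>p. j (fst p) (snd p)) \<in> borel_measurable borel"
    and j_nonneg: "\<And>x y. x \<noteq> y \<Longrightarrow> j x y \<ge> 0"
    and j_sym: "\<And>x y. x \<noteq> y \<Longrightarrow> j x y = j y x"
    and I1_L1: "(\<integral>\<^sup>+ x. I1 j V x \<partial>muV V) < \<infinity>"
    and I1_lb: "loc_bdd_ennreal (I1 j V)"
    and I2_lb: "loc_bdd_ennreal (I2 j V)"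
    and phi_pos: "\<And>x. \<phi> x > 0"
    and phi_C: "hatC j V \<phi>"
    and h_pos: "\<And>x. h x > 0"
    and h_smooth: "smooth_fun h"
    and b_pos: "b > 0" and r_pos: "r > 0"
    and Lyap: "\<And>x. hatL j V \<phi> x \<le> - h x + b * indicator (ball 0 r) x"
  shows "(\<forall>f. Cc_inf f \<longrightarrow>
            (\<integral>\<^sup>+ x. ennreal ((f x)\<^sup>2 * h x / \<phi> x) \<partial>muV V)
              \<le> ennreal (hatD j V f f)
                 + ennreal b * (\<integral>\<^sup>+ x. indicator (ball 0 r) x * ennreal ((f x)\<^sup>2 / \<phi> x) \<partial>muV V))
       \<and> ((\<exists>c>0. \<forall>x. c \<le> \<phi> x) \<longrightarrow>
          (\<forall>f. Cb_inf f \<longrightarrow>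
            (\<integral>\<^sup>+ x. ennreal ((f x)\<^sup>2 * h x / \<phi> x) \<partial>muV V)
              \<le> ennreal (hatD j V f f)
                 + ennreal b * (\<integral>\<^sup>+ x. indicator (ball 0 r) x * ennreal ((f x)\<^sup>2 / \<phi> x) \<partial>muV V)))"
proof -
  have fmV: "finite_measure (muV V)" by (rule finite_muV[OF V_int])
  have phic: "continuous_on UNIV \<phi>" using phi_C smooth_cont unfolding hatC_def by blast
  obtain m where m: "m > 0" "\<And>x. x \<in> cball 0 r \<Longrightarrow> m \<le> \<phi> x"
  proof -
    obtain x0 where x0: "x0 \<in> cball 0 r" "\<forall>y\<in>cball 0 r. \<phi> x0 \<le> \<phi> y"
      using continuous_attains_inf[of "cball (0::'a) r" \<phi>] continuous_on_subset[OF phic, of "cball 0 r"] r_pos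
      by auto
    show ?thesis using that[of "\<phi> x0"] x0 phi_pos by auto
  qed
  have fBgen: "(\<integral>\<^sup>+ x. indicator (ball 0 r) x * ennreal ((f x)\<^sup>2 / \<phi> x) \<partial>muV V) < \<infinity>"
    if fb: "\<And>x. \<bar>f x\<bar> \<le> K" for f :: "'a \<Rightarrow> real" and K
  proof (rule const_bound_fin[OF fmV, of _ "K\<^sup>2 / m"])
    fix x
    show "indicator (ball 0 r) x * ennreal ((f x)\<^sup>2 / \<phi> x) \<le> ennreal (K\<^sup>2 / m)"
    proof (cases "x \<in> ball 0 r")
      case True
      then have "m \<le> \<phi> x" using m by auto
      moreover have "(f x)\<^sup>2 \<le> K\<^sup>2" using power_mono[OF fb[of x] abs_ge_zero, of 2] by simp
      ultimately have "(f x)\<^sup>2 / \<phi> x \<le> K\<^sup>2 / m"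
        using m(1) by (meson frac_le zero_le_power2)
      then show ?thesis using True by (simp add: ennreal_leI)
    qed simp
  qed
  have I1m: "I1 j V \<in> borel_measurable (muV V)"
  proof -
    interpret fm: finite_measure "muV V" by (rule fmV)
    have jm[measurable]: "(\<lambda>p. j (fst p) (snd p)) \<in> borel_measurable (muV V \<Otimes>\<^sub>M muV V)"
      by (subst measurable_cong_sets[OF sets_muV2 refl]) (rule j_meas)
    have "(\<lambda>(x, y). ennreal (min 1 ((norm (x - y))\<^sup>2) * j x y)) \<in> borel_measurable (muV V \<Otimes>\<^sub>M muV V)"
      by measurable
    from fm.borel_measurable_nn_integral[OF this] show ?thesis
      unfolding I1_def[abs_def] by simp
  qed
  have part1: "\<forall>f. Cc_inf f \<longrightarrow>
            (\<integral>\<^sup>+ x. ennreal ((f x)\<^sup>2 * h x / \<phi> x) \<partial>muV V)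
              \<le> ennreal (hatD j V f f)
                 + ennreal b * (\<integral>\<^sup>+ x. indicator (ball 0 r) x * ennreal ((f x)\<^sup>2 / \<phi> x) \<partial>muV V)"
  proof (intro allI impI)
    fix f :: "'a \<Rightarrow> real"
    assume "Cc_inf f"
    then have fs: "smooth_fun f" and cS: "compact (closure {x. f x \<noteq> 0})" unfolding Cc_inf_def by auto
    define S where "S = closure {x. f x \<noteq> 0}"
    have fc: "continuous_on UNIV f" by (rule smooth_cont[OF fs])
    have "compact (f ` S)" using cS continuous_on_subset[OF fc, of S] unfolding S_def
      by (intro compact_continuous_image) auto
    then have "bounded (f ` S)" by (rule compact_imp_bounded)
    then obtain K where K: "\<And>x. x \<in> S \<Longrightarrow> \<bar>f x\<bar> \<le> K"
      unfolding bounded_iff by (auto simp: real_norm_def)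
    have fb: "\<bar>f x\<bar> \<le> max K 0" for x
    proof (cases "x \<in> S")
      case False
      then have "f x = 0" using closure_subset[of "{x. f x \<noteq> 0}"] unfolding S_def by auto
      then show ?thesis by simp
    next
      case True
      then show ?thesis using K[of x] by (simp add: le_max_iff_disj)
    qed
    obtain C where C: "\<forall>x\<in>S. I1 j V x \<le> ennreal C"
      using I1_lb cS unfolding loc_bdd_ennreal_def S_def by blast
    have fI1: "(\<integral>\<^sup>+ x. ennreal ((f x)\<^sup>2) * I1 j V x \<partial>muV V) < \<infinity>"
    proof (rule const_bound_fin[OF fmV, of _ "(max K 0)\<^sup>2 * max C 0"])
      fix x
      show "ennreal ((f x)\<^sup>2) * I1 j V x \<le> ennreal ((max K 0)\<^sup>2 * max C 0)"
      proof (cases "x \<in> S")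
        case True
        have "(f x)\<^sup>2 \<le> (max K 0)\<^sup>2" using power_mono[OF fb[of x] abs_ge_zero, of 2] by simp
        then have a: "ennreal ((f x)\<^sup>2) \<le> ennreal ((max K 0)\<^sup>2)" by (rule ennreal_leI)
        have "I1 j V x \<le> ennreal (max C 0)" using C True
          by (metis ennreal_leI max.cobounded1 order_trans)
        then have "ennreal ((f x)\<^sup>2) * I1 j V x \<le> ennreal ((max K 0)\<^sup>2) * ennreal (max C 0)"
          using a by (intro mult_mono) auto
        then show ?thesis by (simp add: ennreal_mult)
      next
        case False
        then have "f x = 0" using closure_subset[of "{x. f x \<noteq> 0}"] unfolding S_def by auto
        then show ?thesis by simp
      qed
    qed
    show "(\<integral>\<^sup>+ x. ennreal ((f x)\<^sup>2 * h x / \<phi> x) \<partial>muV V)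
              \<le> ennreal (hatD j V f f)
                 + ennreal b * (\<integral>\<^sup>+ x. indicator (ball 0 r) x * ennreal ((f x)\<^sup>2 / \<phi> x) \<partial>muV V)"
      by (rule core[OF V_int j_meas j_nonneg j_sym I1_lb phi_pos phi_C h_smooth h_pos b_pos Lyap
            smooth_meas[OF fs] fI1 fBgen[OF fb]])
  qed
  have part2: "\<forall>f. Cb_inf f \<longrightarrow>
            (\<integral>\<^sup>+ x. ennreal ((f x)\<^sup>2 * h x / \<phi> x) \<partial>muV V)
              \<le> ennreal (hatD j V f f)
                 + ennreal b * (\<integral>\<^sup>+ x. indicator (ball 0 r) x * ennreal ((f x)\<^sup>2 / \<phi> x) \<partial>muV V)"
  proof (intro allI impI)
    fix f :: "'a \<Rightarrow> real"
    assume "Cb_inf f"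
    then have fc: "continuous_on UNIV f" and fbd: "bounded (range f)"
      using smooth_bdd_cont unfolding Cb_inf_def by auto
    obtain K where fb: "\<And>x. \<bar>f x\<bar> \<le> K"
      using fbd unfolding bounded_iff by (auto simp: real_norm_def)
    have fm: "f \<in> borel_measurable borel" using fc by (rule borel_measurable_continuous_onI)
    have fm': "f \<in> borel_measurable (muV V)"
      by (subst measurable_cong_sets[OF sets_muV refl]) (rule fm)
    have fI1: "(\<integral>\<^sup>+ x. ennreal ((f x)\<^sup>2) * I1 j V x \<partial>muV V) < \<infinity>"
    proof -
      have "(\<integral>\<^sup>+ x. ennreal ((f x)\<^sup>2) * I1 j V x \<partial>muV V) \<le> (\<integral>\<^sup>+ x. ennreal (K\<^sup>2) * I1 j V x \<partial>muV V)"
      proof (intro nn_integral_mono mult_right_mono ennreal_leI)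
        fix x show "(f x)\<^sup>2 \<le> K\<^sup>2" using power_mono[OF fb[of x] abs_ge_zero, of 2] by simp
      qed simp
      also have "\<dots> = ennreal (K\<^sup>2) * (\<integral>\<^sup>+ x. I1 j V x \<partial>muV V)"
        by (rule nn_integral_cmult[OF I1m])
      also have "\<dots> < \<infinity>" using I1_L1 by (simp add: ennreal_mult_less_top)
      finally show ?thesis .
    qed
    show "(\<integral>\<^sup>+ x. ennreal ((f x)\<^sup>2 * h x / \<phi> x) \<partial>muV V)
              \<le> ennreal (hatD j V f f)
                 + ennreal b * (\<integral>\<^sup>+ x. indicator (ball 0 r) x * ennreal ((f x)\<^sup>2 / \<phi> x) \<partial>muV V)"
      by (rule core[OF V_int j_meas j_nonneg j_sym I1_lb phi_pos phi_C h_smooth h_pos b_pos Lyap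
            fm fI1 fBgen[OF fb]])
  qed
  show ?thesis using part1 part2 by blast
qed
end
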